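(* For $n\ge 1$ let $p_{n,j}$ be the number of independent sets of size $j$ in the path $P_n$ on $n$ vertices, and let $T_n=\sum_{j=1}^{\lceil n/2\rceil}(-1)^{j-1}j\,p_{n,j}$. Then for every integer $k\ge 0$, $$T_{3k+1}=T_{3k+3}=(-1)^k(k+1),\qquad T_{3k+2}=(-1)^k\,2(k+1).$$
   Context: An independent set of a graph is a set of vertices no two of which are adjacent. *)

theory Defs
  imports Main
begin

definition path_adj :: "nat \<Rightarrow> nat \<Rightarrow> nat \<Rightarrow> bool" where
  "path_adj n u v \<longleftrightarrow> u \<in> {1..n} \<and> v \<in> {1..n} \<and> (v = u + 1 \<or> u = v + 1)"

definition indep_set_path :: "nat \<Rightarrow> nat set \<Rightarrow> bool" where
  "indep_set_path n S \<longleftrightarrow> S \<subseteq> {1..n} \<and> (\<forall>u\<in>S. \<forall>v\<in>S. \<not> path_adj n u v)"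

definition p_path :: "nat \<Rightarrow> nat \<Rightarrow> nat" where
  "p_path n j = card {S. indep_set_path n S \<and> card S = j}"

definition T_path :: "nat \<Rightarrow> int" where
  "T_path n = (\<Sum>j = 1..(n + 1) div 2. (-1) ^ (j - 1) * int j * int (p_path n j))"

end

theory Submission
  imports Defs
begin

lemma indep_iff:
  "indep_set_path n S \<longleftrightarrow> S \<subseteq> {1..n} \<and> (\<forall>u\<in>S. Suc u \<notin> S)"
proof
  assume h: "indep_set_path n S"
  have s: "S \<subseteq> {1..n}" using h unfolding indep_set_path_def by auto
  moreover have "\<forall>u\<in>S. Suc u \<notin> S"
  proof (intro ballI notI)
    fix u assume u: "u \<in> S" "Suc u \<in> S"
    then have "path_adj n u (Suc u)" using s unfolding path_adj_def by auto
    with u h show False unfolding indep_set_path_def by blast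
  qed
  ultimately show "S \<subseteq> {1..n} \<and> (\<forall>u\<in>S. Suc u \<notin> S)" by blast
next
  assume h: "S \<subseteq> {1..n} \<and> (\<forall>u\<in>S. Suc u \<notin> S)"
  show "indep_set_path n S" unfolding indep_set_path_def
  proof (intro conjI ballI)
    show "S \<subseteq> {1..n}" using h by blast
    fix u v assume "u \<in> S" "v \<in> S"
    then show "\<not> path_adj n u v" using h unfolding path_adj_def by auto
  qed
qed

lemma indep_step:
  "indep_set_path (Suc (Suc n)) S \<longleftrightarrow>
     indep_set_path (Suc n) S \<or> (Suc (Suc n) \<in> S \<and> indep_set_path n (S - {Suc (Suc n)}))"
proof
  assume h: "indep_set_path (Suc (Suc n)) S"
  show "indep_set_path (Suc n) S \<or> (Suc (Suc n) \<in> S \<and> indep_set_path n (S - {Suc (Suc n)}))"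
  proof (cases "Suc (Suc n) \<in> S")
    case True
    have s: "S \<subseteq> {1..Suc (Suc n)}" and nx: "\<forall>u\<in>S. Suc u \<notin> S" using h unfolding indep_iff by blast+
    have n1: "Suc n \<notin> S" using nx True by blast
    have "S - {Suc (Suc n)} \<subseteq> {1..n}"
    proof
      fix x assume x: "x \<in> S - {Suc (Suc n)}"
      then have "x \<in> {1..Suc (Suc n)}" "x \<noteq> Suc (Suc n)" "x \<noteq> Suc n" using s n1 by auto
      then show "x \<in> {1..n}" by auto
    qed
    moreover have "\<forall>u\<in>S - {Suc (Suc n)}. Suc u \<notin> S - {Suc (Suc n)}" using nx by blast
    ultimately show ?thesis using True unfolding indep_iff by blast
  next
    case False
    have s: "S \<subseteq> {1..Suc (Suc n)}" and nx: "\<forall>u\<in>S. Suc u \<notin> S" using h unfolding indep_iff by blast+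
    have "S \<subseteq> {1..Suc n}"
    proof
      fix x assume x: "x \<in> S"
      then have "x \<in> {1..Suc (Suc n)}" "x \<noteq> Suc (Suc n)" using s False by auto
      then show "x \<in> {1..Suc n}" by auto
    qed
    then show ?thesis using nx unfolding indep_iff by blast
  qed
next
  assume "indep_set_path (Suc n) S \<or> (Suc (Suc n) \<in> S \<and> indep_set_path n (S - {Suc (Suc n)}))"
  then show "indep_set_path (Suc (Suc n)) S"
  proof
    assume "indep_set_path (Suc n) S"
    then have s: "S \<subseteq> {1..Suc n}" and nx: "\<forall>u\<in>S. Suc u \<notin> S" unfolding indep_iff by blast+
    have "S \<subseteq> {1..Suc (Suc n)}"
    proof
      fix x assume "x \<in> S" then have "x \<in> {1..Suc n}" using s by blast
      then show "x \<in> {1..Suc (Suc n)}" by simp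
    qed
    then show ?thesis using nx unfolding indep_iff by blast
  next
    assume h: "Suc (Suc n) \<in> S \<and> indep_set_path n (S - {Suc (Suc n)})"
    then have s: "S - {Suc (Suc n)} \<subseteq> {1..n}" and nx: "\<forall>u\<in>S - {Suc (Suc n)}. Suc u \<notin> S - {Suc (Suc n)}"
      and m: "Suc (Suc n) \<in> S" unfolding indep_iff by blast+
    have "S \<subseteq> {1..Suc (Suc n)}"
    proof
      fix x assume x: "x \<in> S"
      show "x \<in> {1..Suc (Suc n)}"
      proof (cases "x = Suc (Suc n)")
        case True then show ?thesis by simp
      next
        case False then have "x \<in> {1..n}" using s x by blast
        then show ?thesis by simp
      qed
    qed
    moreover have "\<forall>u\<in>S. Suc u \<notin> S"
    proof (intro ballI notI)
      fix u assume u: "u \<in> S" "Suc u \<in> S"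
      show False
      proof (cases "u = Suc n")
        case True
        then have "Suc n \<in> S - {Suc (Suc n)}" using u by simp
        then have "Suc n \<in> {1..n}" using s by blast
        then show False by simp
      next
        case False
        show False
        proof (cases "u = Suc (Suc n)")
          case True
          then have "Suc (Suc (Suc n)) \<in> S - {Suc (Suc n)}" using u by simp
          then have "Suc (Suc (Suc n)) \<in> {1..n}" using s by blast
          then show False by simp
        next
          case False2: False
          then have ud: "u \<in> S - {Suc (Suc n)}" using u by simp
          then have "u \<in> {1..n}" using s by blast
          then have "Suc u \<noteq> Suc (Suc n)" using False by simp
          then have "Suc u \<in> S - {Suc (Suc n)}" using u by simp
          then show False using nx ud by blast
        qed
      qed
    qed
    ultimately show ?thesis unfolding indep_iff by blast
  qed
qed

lemma indep_finite: "indep_set_path n S \<Longrightarrow> finite S"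
  unfolding indep_iff using finite_subset by blast

lemma fin_family: "finite {S. indep_set_path n S \<and> P S}"
proof -
  have "{S. indep_set_path n S \<and> P S} \<subseteq> Pow {1..n}" unfolding indep_iff by auto
  then show ?thesis by (rule finite_subset) simp
qed

lemma p_rec: "p_path (Suc (Suc n)) (Suc j) = p_path (Suc n) (Suc j) + p_path n j"
proof -
  let ?X = "{S. indep_set_path (Suc n) S \<and> card S = Suc j}"
  let ?Y = "{S. indep_set_path n S \<and> card S = j}"
  have eq: "{S. indep_set_path (Suc (Suc n)) S \<and> card S = Suc j} = ?X \<union> insert (Suc (Suc n)) ` ?Y"
  proof (intro equalityI subsetI)
    fix S assume "S \<in> {S. indep_set_path (Suc (Suc n)) S \<and> card S = Suc j}"
    then have a: "indep_set_path (Suc (Suc n)) S" "card S = Suc j" by auto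
    show "S \<in> ?X \<union> insert (Suc (Suc n)) ` ?Y"
    proof (cases "indep_set_path (Suc n) S")
      case True then show ?thesis using a by auto
    next
      case False
      then have b: "Suc (Suc n) \<in> S" "indep_set_path n (S - {Suc (Suc n)})" using a indep_step by auto
      have "card (S - {Suc (Suc n)}) = j" using a b indep_finite[OF a(1)] by simp
      moreover have "S = insert (Suc (Suc n)) (S - {Suc (Suc n)})" using b by auto
      ultimately show ?thesis using b by blast
    qed
  next
    fix S assume "S \<in> ?X \<union> insert (Suc (Suc n)) ` ?Y"
    then show "S \<in> {S. indep_set_path (Suc (Suc n)) S \<and> card S = Suc j}"
    proof
      assume "S \<in> ?X" then show ?thesis using indep_step by auto
    next
      assume "S \<in> insert (Suc (Suc n)) ` ?Y"
      then obtain T where T: "indep_set_path n T" "card T = j" "S = insert (Suc (Suc n)) T" by auto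
      have nn: "Suc (Suc n) \<notin> T" using T(1) unfolding indep_iff by auto
      have "T = S - {Suc (Suc n)}" using T nn by auto
      then have "indep_set_path (Suc (Suc n)) S" using indep_step T by auto
      moreover have "card S = Suc j" using T nn indep_finite[OF T(1)] by simp
      ultimately show ?thesis by simp
    qed
  qed
  have disj: "?X \<inter> insert (Suc (Suc n)) ` ?Y = {}" unfolding indep_iff by auto
  have inj: "inj_on (insert (Suc (Suc n))) ?Y"
  proof (rule inj_onI)
    fix A B assume "A \<in> ?Y" "B \<in> ?Y" "insert (Suc (Suc n)) A = insert (Suc (Suc n)) B"
    moreover have "Suc (Suc n) \<notin> A" "Suc (Suc n) \<notin> B" using calculation unfolding indep_iff by auto
    ultimately show "A = B" by (metis insert_ident)
  qed
  have "p_path (Suc (Suc n)) (Suc j) = card (?X \<union> insert (Suc (Suc n)) ` ?Y)"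
    unfolding p_path_def eq ..
  also have "\<dots> = card ?X + card (insert (Suc (Suc n)) ` ?Y)"
    by (rule card_Un_disjoint) (auto intro: fin_family finite_imageI simp: disj)
  also have "card (insert (Suc (Suc n)) ` ?Y) = card ?Y" using inj by (rule card_image)
  finally show ?thesis unfolding p_path_def .
qed

lemma p_zero: "p_path n 0 = 1"
proof -
  have "{S. indep_set_path n S \<and> card S = 0} = {{}}"
    using indep_finite unfolding indep_iff by auto
  then show ?thesis unfolding p_path_def by simp
qed

lemma p0: "p_path 0 j = (if j = 0 then 1 else 0)"
proof -
  have i: "indep_set_path 0 S \<longleftrightarrow> S = {}" for S unfolding indep_iff by auto
  have "{S. indep_set_path 0 S \<and> card S = j} = (if j = 0 then {{}} else {})"
    unfolding i by (cases "j = 0") auto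
  then show ?thesis unfolding p_path_def by simp
qed

lemma p1: "p_path 1 j = (if j \<le> 1 then 1 else 0)"
proof -
  have i: "indep_set_path 1 S \<longleftrightarrow> S = {} \<or> S = {1}" for S
    unfolding indep_iff by (auto simp: subset_singleton_iff)
  have "{S. indep_set_path 1 S \<and> card S = j} = (if j = 0 then {{}} else if j = 1 then {{1}} else {})"
    unfolding i by (cases "j = 0"; cases "j = 1") auto
  then show ?thesis unfolding p_path_def by auto
qed

lemma p1s: "p_path (Suc 0) j = (if j \<le> 1 then 1 else 0)"
  using p1 by simp

lemma p_vanish: "n + 1 < 2 * j \<Longrightarrow> p_path n j = 0"
proof (induction n arbitrary: j rule: less_induct)
  case (less n)
  show ?case
  proof (cases n)
    case 0 then show ?thesis using less p0 by simp
  next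
    case (Suc m)
    show ?thesis
    proof (cases m)
      case 0 then show ?thesis using less p1 Suc by simp
    next
      case (Suc m')
      obtain j' where j: "j = Suc j'" using less.prems by (cases j) auto
      show ?thesis using less.IH[of m j] less.IH[of m' j'] less.prems j Suc \<open>n = Suc m\<close> p_rec by simp
    qed
  qed
qed

definition Aseq :: "nat \<Rightarrow> int" where
  "Aseq n = (\<Sum>j<n+1. (-1)^j * int (p_path n j))"

definition Bseq :: "nat \<Rightarrow> int" where
  "Bseq n = (\<Sum>j<n+1. (-1)^j * int j * int (p_path n j))"

lemma p_big: "n + 1 \<le> j \<Longrightarrow> p_path n j = 0"
  by (rule p_vanish) simp

lemma A_ext: "n + 1 \<le> N \<Longrightarrow> Aseq n = (\<Sum>j<N. (-1)^j * int (p_path n j))"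
  unfolding Aseq_def by (rule sum.mono_neutral_left) (auto simp: p_big)

lemma B_ext: "n + 1 \<le> N \<Longrightarrow> Bseq n = (\<Sum>j<N. (-1)^j * int j * int (p_path n j))"
  unfolding Bseq_def by (rule sum.mono_neutral_left) (auto simp: p_big)

lemma A_rec: "Aseq (Suc (Suc n)) = Aseq (Suc n) - Aseq n"
proof -
  have "Aseq (Suc (Suc n)) = (\<Sum>j<Suc (n+2). (-1)^j * int (p_path (Suc (Suc n)) j))"
    by (rule A_ext) simp
  also have "\<dots> = 1 + (\<Sum>j<n+2. (-1)^(Suc j) * int (p_path (Suc (Suc n)) (Suc j)))"
    by (subst sum.lessThan_Suc_shift) (simp add: p_zero)
  also have "\<dots> = 1 + ((\<Sum>j<n+2. (-1)^(Suc j) * int (p_path (Suc n) (Suc j)))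
                    - (\<Sum>j<n+2. (-1)^j * int (p_path n j)))"
    by (subst sum_subtractf[symmetric], rule arg_cong[where f="\<lambda>x. 1 + x"], rule sum.cong)
       (simp_all add: p_rec algebra_simps)
  also have "\<dots> = 1 + (\<Sum>j<n+2. (-1)^(Suc j) * int (p_path (Suc n) (Suc j)))
                    - (\<Sum>j<n+2. (-1)^j * int (p_path n j))" by simp
  also have "(\<Sum>j<n+2. (-1)^j * int (p_path n j)) = Aseq n"
    by (rule A_ext[symmetric]) simp
  also have "1 + (\<Sum>j<n+2. (-1)^(Suc j) * int (p_path (Suc n) (Suc j))) = Aseq (Suc n)"
  proof -
    have "Aseq (Suc n) = (\<Sum>j<Suc (n+2). (-1)^j * int (p_path (Suc n) j))"
      by (rule A_ext) simp
    also have "\<dots> = 1 + (\<Sum>j<n+2. (-1)^(Suc j) * int (p_path (Suc n) (Suc j)))"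
      by (subst sum.lessThan_Suc_shift) (simp add: p_zero)
    finally show ?thesis by simp
  qed
  finally show ?thesis .
qed

lemma B_rec: "Bseq (Suc (Suc n)) = Bseq (Suc n) - Bseq n - Aseq n"
proof -
  have "Bseq (Suc (Suc n)) = (\<Sum>j<Suc (n+2). (-1)^j * int j * int (p_path (Suc (Suc n)) j))"
    by (rule B_ext) simp
  also have "\<dots> = (\<Sum>j<n+2. (-1)^(Suc j) * int (Suc j) * int (p_path (Suc (Suc n)) (Suc j)))"
    by (subst sum.lessThan_Suc_shift) simp
  also have "\<dots> = (\<Sum>j<n+2. (-1)^(Suc j) * int (Suc j) * int (p_path (Suc n) (Suc j)))
                    - (\<Sum>j<n+2. (-1)^j * int j * int (p_path n j))
                    - (\<Sum>j<n+2. (-1)^j * int (p_path n j))"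
    by (subst sum_subtractf[symmetric], subst sum_subtractf[symmetric], rule sum.cong)
       (simp_all add: p_rec algebra_simps)
  also have "(\<Sum>j<n+2. (-1)^j * int j * int (p_path n j)) = Bseq n"
    by (rule B_ext[symmetric]) simp
  also have "(\<Sum>j<n+2. (-1)^j * int (p_path n j)) = Aseq n"
    by (rule A_ext[symmetric]) simp
  also have "(\<Sum>j<n+2. (-1)^(Suc j) * int (Suc j) * int (p_path (Suc n) (Suc j))) = Bseq (Suc n)"
  proof -
    have "Bseq (Suc n) = (\<Sum>j<Suc (n+2). (-1)^j * int j * int (p_path (Suc n) j))"
      by (rule B_ext) simp
    also have "\<dots> = (\<Sum>j<n+2. (-1)^(Suc j) * int (Suc j) * int (p_path (Suc n) (Suc j)))"
      by (subst sum.lessThan_Suc_shift) simp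
    finally show ?thesis by simp
  qed
  finally show ?thesis .
qed

lemma T_B: "T_path n = - Bseq n"
proof -
  have "T_path n = (\<Sum>j = 1..(n + 1) div 2. - ((-1)^j * int j * int (p_path n j)))"
    unfolding T_path_def
  proof (rule sum.cong)
    fix j assume "j \<in> {1..(n + 1) div 2}"
    then obtain i where "j = Suc i" by (cases j) auto
    then show "(-1) ^ (j - 1) * int j * int (p_path n j) = - ((-1)^j * int j * int (p_path n j))"
      by simp
  qed simp
  also have "\<dots> = (\<Sum>j<n+1. - ((-1)^j * int j * int (p_path n j)))"
  proof (rule sum.mono_neutral_left)
    show "{1..(n + 1) div 2} \<subseteq> {..<n + 1}" by auto
    show "\<forall>i\<in>{..<n + 1} - {1..(n + 1) div 2}. - ((-1) ^ i * int i * int (p_path n i)) = 0"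
    proof
      fix i assume "i \<in> {..<n + 1} - {1..(n + 1) div 2}"
      then have "i = 0 \<or> n + 1 < 2 * i" by auto
      then show "- ((-1) ^ i * int i * int (p_path n i)) = 0"
        using p_vanish by auto
    qed
  qed simp
  also have "\<dots> = - Bseq n" unfolding Bseq_def by (simp add: sum_negf)
  finally show ?thesis .
qed

lemma A0: "Aseq 0 = 1" unfolding Aseq_def by (simp add: p0)
lemma A1: "Aseq 1 = 0" unfolding Aseq_def by (simp add: p1s)
lemma B0: "Bseq 0 = 0" unfolding Bseq_def by (simp add: p0)
lemma B1: "Bseq 1 = -1" unfolding Bseq_def by (simp add: p1s)

lemma main:
  "Aseq (3*k) = (-1)^k \<and> Aseq (3*k+1) = 0 \<and> Aseq (3*k+2) = - ((-1)^k)
   \<and> Bseq (3*k+1) = - ((-1)^k * int (k+1)) \<and> Bseq (3*k+2) = - ((-1)^k * (2 * int (k+1)))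
   \<and> Bseq (3*k+3) = - ((-1)^k * int (k+1))"
proof (induction k)
  case 0
  have a2: "Aseq 2 = -1" using A_rec[of 0] A0 A1 by (simp add: numeral_2_eq_2)
  have b2: "Bseq 2 = -2" using B_rec[of 0] A0 B0 B1 by (simp add: numeral_2_eq_2)
  have b3: "Bseq 3 = -1" using B_rec[of 1] A1 b2 B1 by (simp add: numeral_3_eq_3 numeral_2_eq_2)
  show ?case using A0 A1 B1 a2 b2 b3 by (simp add: numeral_2_eq_2 numeral_3_eq_3)
next
  case (Suc k)
  let ?s = "(-1::int)^k"
  have AR: "a = m + 2 \<Longrightarrow> b = m + 1 \<Longrightarrow> Aseq a = Aseq b - Aseq m" for a b m
    using A_rec[of m] by simp
  have BR: "a = m + 2 \<Longrightarrow> b = m + 1 \<Longrightarrow> Bseq a = Bseq b - Bseq m - Aseq m" for a b m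
    using B_rec[of m] by simp
  have i1: "Aseq (3*k+1) = 0" "Aseq (3*k+2) = - ?s" "Bseq (3*k+1) = - (?s * int (k+1))"
    "Bseq (3*k+2) = - (?s * (2 * int (k+1)))" "Bseq (3*k+3) = - (?s * int (k+1))"
    using Suc.IH by auto
  have a3: "Aseq (3*k+3) = - ?s" 
    by (simp only: AR[of "3*k+3" "3*k+1" "3*k+2"] i1; simp_all)
  have a4: "Aseq (3*k+4) = 0"
    by (simp only: AR[of "3*k+4" "3*k+2" "3*k+3"] i1 a3; simp_all)
  have a5: "Aseq (3*k+5) = ?s"
    by (simp only: AR[of "3*k+5" "3*k+3" "3*k+4"] a4 a3; simp_all)
  have b4: "Bseq (3*k+4) = ?s * int (k+2)"
    by (simp only: BR[of "3*k+4" "3*k+2" "3*k+3"] i1; simp_all add: algebra_simps)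
  have b5: "Bseq (3*k+5) = ?s * (2 * int (k+2))"
    by (simp only: BR[of "3*k+5" "3*k+3" "3*k+4"] i1 a3 b4; simp_all add: algebra_simps)
  have b6: "Bseq (3*k+6) = ?s * int (k+2)"
    by (simp only: BR[of "3*k+6" "3*k+4" "3*k+5"] a4 b4 b5; simp_all add: algebra_simps)
  have e: "3 * Suc k = 3*k+3" "3 * Suc k + 1 = 3*k+4" "3 * Suc k + 2 = 3*k+5" "3 * Suc k + 3 = 3*k+6" by simp_all
  show ?case unfolding e using a3 a4 a5 b4 b5 b6 by (simp add: algebra_simps)
qed

theorem lemma4p4:
  fixes k :: nat
  shows "T_path (3 * k + 1) = (-1) ^ k * int (k + 1)
       \<and> T_path (3 * k + 3) = (-1) ^ k * int (k + 1)
       \<and> T_path (3 * k + 2) = (-1) ^ k * (2 * int (k + 1))"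
  using main[of k] by (simp add: T_B)

end
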